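(* For every integer $k\ge 2$ and every positive integer $n$, \[ t_{2k}(n)\le \frac{2k-3}{3}\,\mathrm{ex}(n, C_{2k}). \]
   Context: All graphs are simple. For a graph $G$, $t(G)$ denotes the number of triangles of $G$. A graph is $F$-free if it contains no (not necessarily induced) subgraph isomorphic to $F$. For $\ell\ge 3$, $t_\ell(n)$ is the maximum of $t(G)$ over all $C_\ell$-free graphs on $n$ vertices, $C_\ell$ being the cycle of length $\ell$. $\mathrm{ex}(n,F)$ is the maximum number of edges of an $F$-free graph on $n$ vertices. *)

theory Defs
  imports Complex_Main
begin

definition graphs_on :: "nat \<Rightarrow> nat set set set" where
  "graphs_on n = Pow {e. e \<subseteq> {..<n} \<and> card e = 2}"

definition triangles :: "nat set set \<Rightarrow> nat set set" where
  "triangles G = {T. \<exists>a b c. T = {a, b, c} \<and> a \<noteq> b \<and> b \<noteq> c \<and> a \<noteq> c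
                         \<and> {a, b} \<in> G \<and> {b, c} \<in> G \<and> {a, c} \<in> G}"

definition num_triangles :: "nat set set \<Rightarrow> nat" where
  "num_triangles G = card (triangles G)"

definition has_cycle :: "nat \<Rightarrow> nat set set \<Rightarrow> bool" where
  "has_cycle l G = (\<exists>vs. length vs = l \<and> distinct vs \<and>
       (\<forall>i<l. {vs ! i, vs ! ((i + 1) mod l)} \<in> G))"

definition cycle_free :: "nat \<Rightarrow> nat set set \<Rightarrow> bool" where
  "cycle_free l G = (\<not> has_cycle l G)"

definition t_cyc :: "nat \<Rightarrow> nat \<Rightarrow> nat" where
  "t_cyc l n = Max (num_triangles ` {G \<in> graphs_on n. cycle_free l G})"

definition ex_cyc :: "nat \<Rightarrow> nat \<Rightarrow> nat" where
  "ex_cyc n l = Max (card ` {G \<in> graphs_on n. cycle_free l G})"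

end

theory Submission
  imports Defs
begin

fun walk :: "'a set set \<Rightarrow> 'a list \<Rightarrow> bool" where
  "walk E [] = True"
| "walk E [x] = True"
| "walk E (x # y # xs) = ({x, y} \<in> E \<and> walk E (y # xs))"

lemma walk_Cons: "walk E (x # xs) \<longleftrightarrow> walk E xs \<and> (xs \<noteq> [] \<longrightarrow> {x, hd xs} \<in> E)"
  by (cases xs) auto

lemma walk_append:
  "walk E (xs @ ys) \<longleftrightarrow> walk E xs \<and> walk E ys \<and> (xs \<noteq> [] \<longrightarrow> ys \<noteq> [] \<longrightarrow> {last xs, hd ys} \<in> E)"
  by (induction E xs rule: walk.induct) (auto simp: walk_Cons)

lemma walk_rev: "walk E (rev xs) = walk E xs"
  by (induction xs) (auto simp: walk_append walk_Cons insert_commute last_rev)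

lemma walk_mono: "E \<subseteq> F \<Longrightarrow> walk E xs \<Longrightarrow> walk F xs"
  by (induction E xs rule: walk.induct) auto

lemma walk_nth: "walk E xs \<longleftrightarrow> (\<forall>i. Suc i < length xs \<longrightarrow> {xs ! i, xs ! Suc i} \<in> E)"
proof (induction E xs rule: walk.induct)
  case (3 E x y xs)
  show ?case
  proof
    assume "walk E (x # y # xs)"
    then show "\<forall>i. Suc i < length (x # y # xs) \<longrightarrow> {(x # y # xs) ! i, (x # y # xs) ! Suc i} \<in> E"
      using 3 by (auto simp: nth_Cons split: nat.splits)
  next
    assume h: "\<forall>i. Suc i < length (x # y # xs) \<longrightarrow> {(x # y # xs) ! i, (x # y # xs) ! Suc i} \<in> E"
    have "{x, y} \<in> E" using h[rule_format, of 0] by simp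
    moreover have "\<forall>i. Suc i < length (y # xs) \<longrightarrow> {(y # xs) ! i, (y # xs) ! Suc i} \<in> E"
      using h[rule_format, of "Suc _"] by auto
    ultimately show "walk E (x # y # xs)" using 3 by simp
  qed
qed auto

lemma walk_take: "walk E xs \<Longrightarrow> walk E (take n xs)"
  using walk_append[of E "take n xs" "drop n xs"] by simp

lemma walk_drop: "walk E xs \<Longrightarrow> walk E (drop n xs)"
  using walk_append[of E "take n xs" "drop n xs"] by simp

lemma walk_rot:
  assumes "walk E cs" "{last cs, hd cs} \<in> E" "r < length cs"
  shows "walk E (drop r cs @ take r cs)"
proof -
  have w: "walk E (drop r cs)" "walk E (take r cs)" using assms walk_take walk_drop by auto
  have l: "last (drop r cs) = last cs" using assms(3) by (rule last_drop)
  have "take r cs \<noteq> [] \<Longrightarrow> hd (take r cs) = hd cs" by (simp add: hd_take)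
  then have "take r cs \<noteq> [] \<Longrightarrow> {last (drop r cs), hd (take r cs)} \<in> E"
    using assms(2) l by simp
  then show ?thesis using w by (simp only: walk_append) blast
qed

lemma card_incident:
  assumes "\<forall>e\<in>E. card e = 2"
  shows "card {e\<in>E. x \<in> e} = card {u. {x,u} \<in> E}"
proof -
  have "{e\<in>E. x \<in> e} = (\<lambda>u. {x,u}) ` {u. {x,u} \<in> E}"
  proof
    show "{e\<in>E. x \<in> e} \<subseteq> (\<lambda>u. {x,u}) ` {u. {x,u} \<in> E}"
    proof
      fix e assume "e \<in> {e\<in>E. x \<in> e}"
      then have e: "e \<in> E" "x \<in> e" by auto
      then obtain a b where "e = {a,b}" "a \<noteq> b" using assms card_2_iff by metis
      then have "e = {x, (if x = a then b else a)}" using e by auto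
      then show "e \<in> (\<lambda>u. {x,u}) ` {u. {x,u} \<in> E}" using e by auto
    qed
  qed auto
  moreover have "inj_on (\<lambda>u. {x,u}) {u. {x,u} \<in> E}"
    by (auto simp: inj_on_def doubleton_eq_iff)
  ultimately show ?thesis by (simp add: card_image)
qed

lemma EG:
  assumes "finite V" "E \<subseteq> {e. e \<subseteq> V \<and> card e = 2}" "l \<ge> 1"
    "\<not>(\<exists>xs. length xs = Suc l \<and> distinct xs \<and> walk E xs \<and> set xs \<subseteq> V)"
  shows "2 * card E \<le> (l - 1) * card V"
  using assms
proof (induction "card V" arbitrary: V E rule: less_induct)
  case less
  note fin = less.prems(1) and Esub = less.prems(2) and l1 = less.prems(3) and noP = less.prems(4)
  have "E \<subseteq> Pow V" using Esub by auto
  then have finE: "finite E" using fin by (meson finite_Pow_iff finite_subset)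
  have E2: "\<forall>e\<in>E. card e = 2" and EV: "\<forall>e\<in>E. e \<subseteq> V" using Esub by auto
  define N where "N x = {u. {x,u} \<in> E}" for x
  have notin: "x \<notin> N x" for x using E2 by (auto simp: N_def)
  have caseA: "2 * card E \<le> (l-1) * card V" if xV: "x \<in> V" and dx: "2 * card (N x) \<le> l - 1" for x
  proof -
    let ?E' = "{e\<in>E. x \<notin> e}" let ?V' = "V - {x}"
    have lt: "card ?V' < card V" using fin xV by (rule card_Diff1_less)
    have s: "?E' \<subseteq> {e. e \<subseteq> ?V' \<and> card e = 2}" using Esub by auto
    have np: "\<not>(\<exists>xs. length xs = Suc l \<and> distinct xs \<and> walk ?E' xs \<and> set xs \<subseteq> ?V')"
    proof
      assume "\<exists>xs. length xs = Suc l \<and> distinct xs \<and> walk ?E' xs \<and> set xs \<subseteq> ?V'"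
      then obtain xs where "length xs = Suc l" "distinct xs" "walk ?E' xs" "set xs \<subseteq> ?V'" by blast
      moreover have "walk E xs" using walk_mono[OF _ \<open>walk ?E' xs\<close>] by blast
      ultimately show False using noP by blast
    qed
    have IH: "2 * card ?E' \<le> (l-1) * card ?V'"
      using less.hyps[OF lt _ s l1 np] fin by blast
    have "E = ?E' \<union> {e\<in>E. x \<in> e}" by auto
    then have "card E = card ?E' + card {e\<in>E. x \<in> e}"
      using finE by (metis (no_types, lifting) card_Un_disjoint disjoint_iff finite_Un mem_Collect_eq)
    moreover have "card {e\<in>E. x \<in> e} = card (N x)" using card_incident[OF E2] by (simp add: N_def)
    moreover have "card ?V' = card V - 1" using xV fin by simp
    moreover have "card V \<ge> 1" using xV fin by (metis One_nat_def Suc_leI card_gt_0_iff empty_iff)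
    ultimately have "2 * card E \<le> (l-1) * (card V - 1) + (l - 1)" using IH dx by simp
    also have "\<dots> = (l-1) * card V" using \<open>card V \<ge> 1\<close>
      by (cases "card V") auto
    finally show ?thesis .
  qed
  show ?case
  proof (cases "E = {}")
    case True then show ?thesis by simp
  next
    case False
    then obtain e where "e \<in> E" by blast
    then obtain a b where ab: "e = {a,b}" "a \<noteq> b" using E2 card_2_iff by metis
    define P where "P xs \<longleftrightarrow> distinct xs \<and> walk E xs \<and> set xs \<subseteq> V" for xs
    have Pab: "P [a,b]" using ab \<open>e \<in> E\<close> EV by (auto simp: P_def)
    have bound: "\<forall>xs. P xs \<longrightarrow> length xs < card V + 1"
      using fin by (auto simp: P_def distinct_card[symmetric] card_mono less_Suc_eq_le)
    obtain ps where Pps: "P ps" and maxps: "\<forall>ys. P ys \<longrightarrow> length ys \<le> length ps"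
      using ex_has_greatest_nat[of P "[a,b]" length "card V + 1", OF Pab bound] by blast
    have dps: "distinct ps" and wps: "walk E ps" and sps: "set ps \<subseteq> V" using Pps by (auto simp: P_def)
    have len2: "length ps \<ge> 2" using maxps Pab by fastforce
    have lenl: "length ps \<le> l"
    proof (rule ccontr)
      assume "\<not> length ps \<le> l"
      then have "length (take (Suc l) ps) = Suc l" by simp
      moreover have "distinct (take (Suc l) ps)" using dps by simp
      moreover have "walk E (take (Suc l) ps)" using wps by (rule walk_take)
      moreover have "set (take (Suc l) ps) \<subseteq> V" using sps set_take_subset by fastforce
      ultimately show False using noP by blast
    qed
    define m where "m = length ps - 1"
    have lm: "length ps = Suc m" using len2 m_def by simp
    define p0 where "p0 = hd ps"
    define pm where "pm = last ps"
    have ps0: "ps ! 0 = p0" using len2 unfolding p0_def by (cases ps) auto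
    have psm: "ps ! m = pm" using lm unfolding pm_def
      by (metis diff_Suc_1 last_conv_nth list.size(3) nat.distinct(1))
    have nonext: False if "\<forall>ys. P ys \<longrightarrow> length ys \<le> length ps" "P ys" "length ys > length ps" for ys
      using that by fastforce
    have N0: "N p0 \<subseteq> set ps"
    proof
      fix u assume u: "u \<in> N p0"
      show "u \<in> set ps"
      proof (rule ccontr)
        assume nu: "u \<notin> set ps"
        have "{u, hd ps} \<in> E" using u by (simp add: N_def p0_def insert_commute)
        then have "P (u # ps)" using nu Pps EV len2 by (auto simp: P_def walk_Cons)
        then show False using maxps by fastforce
      qed
    qed
    have Nm: "N pm \<subseteq> set ps"
    proof
      fix u assume u: "u \<in> N pm"
      show "u \<in> set ps"
      proof (rule ccontr)
        assume nu: "u \<notin> set ps"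
        have "{last ps, u} \<in> E" using u by (simp add: N_def pm_def)
        then have "P (ps @ [u])" using nu Pps EV len2 by (auto simp: P_def walk_append)
        then show False using maxps by fastforce
      qed
    qed
    have p0V: "p0 \<in> V" and pmV: "pm \<in> V" proof -
      have "ps \<noteq> []" using len2 by auto
      then show "p0 \<in> V" "pm \<in> V" using sps by (auto simp: p0_def pm_def)
    qed
    show ?thesis
    proof (cases "2 * card (N p0) \<le> l - 1")
      case True then show ?thesis using caseA p0V by blast
    next
      case F0: False
      show ?thesis
      proof (cases "2 * card (N pm) \<le> l - 1")
        case True then show ?thesis using caseA pmV by blast
      next
        case Fm: False
        have degs: "card (N p0) + card (N pm) \<ge> Suc m" using F0 Fm lenl lm by linarith
        define S where "S = {i. i < m \<and> {p0, ps ! Suc i} \<in> E}"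
        define T where "T = {i. i < m \<and> {pm, ps ! i} \<in> E}"
        have "N p0 = (\<lambda>i. ps ! Suc i) ` S"
        proof
          show "N p0 \<subseteq> (\<lambda>i. ps ! Suc i) ` S"
          proof
            fix u assume u: "u \<in> N p0"
            then obtain j where j: "j < length ps" "ps ! j = u" using N0 by (meson in_set_conv_nth subsetD)
            have "j \<noteq> 0" using j ps0 u notin by metis
            then obtain i where "j = Suc i" using not0_implies_Suc by blast
            then show "u \<in> (\<lambda>i. ps ! Suc i) ` S" using j u lm by (auto simp: S_def N_def)
          qed
        qed (auto simp: S_def N_def)
        moreover have "inj_on (\<lambda>i. ps ! Suc i) S"
          using dps lm by (auto simp: inj_on_def S_def nth_eq_iff_index_eq)
        ultimately have cS: "card S = card (N p0)" by (simp add: card_image)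
        have "N pm = (\<lambda>i. ps ! i) ` T"
        proof
          show "N pm \<subseteq> (\<lambda>i. ps ! i) ` T"
          proof
            fix u assume u: "u \<in> N pm"
            then obtain j where j: "j < length ps" "ps ! j = u" using Nm by (meson in_set_conv_nth subsetD)
            have "j \<noteq> m" using j psm u notin by metis
            then have "j < m" using j lm by simp
            then show "u \<in> (\<lambda>i. ps ! i) ` T" using j u by (auto simp: T_def N_def)
          qed
        qed (auto simp: T_def N_def)
        moreover have "inj_on (\<lambda>i. ps ! i) T"
          using dps lm by (auto simp: inj_on_def T_def nth_eq_iff_index_eq)
        ultimately have cT: "card T = card (N pm)" by (simp add: card_image)
        have finST: "finite S" "finite T" by (auto simp: S_def T_def)
        have "card (S \<union> T) \<le> m"
        proof -
          have "S \<union> T \<subseteq> {..<m}" by (auto simp: S_def T_def)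
          then show ?thesis by (metis card_lessThan card_mono finite_lessThan)
        qed
        then have "card (S \<inter> T) > 0" using card_Un_Int[OF finST] cS cT degs by linarith
        then obtain i where i: "i \<in> S" "i \<in> T" by (metis card_gt_0_iff disjoint_iff inf_bot_right)
        have im: "i < m" and e1: "{p0, ps ! Suc i} \<in> E" and e2: "{pm, ps ! i} \<in> E"
          using i by (auto simp: S_def T_def)
        define cs where "cs = take (Suc i) ps @ rev (drop (Suc i) ps)"
        have setcs: "set cs = set ps"
          by (metis cs_def append_take_drop_id set_append set_rev)
        have dcs: "distinct cs"
        proof -
          have "distinct (take (Suc i) ps @ drop (Suc i) ps)" using dps by simp
          then show ?thesis unfolding cs_def distinct_append by simp
        qed
        have lcs: "length cs = length ps" by (simp add: cs_def)
        have dne: "drop (Suc i) ps \<noteq> []" using im lm by simp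
        have wcs: "walk E cs"
        proof -
          have "last (take (Suc i) ps) = ps ! i" using im lm by (subst last_conv_nth) auto
          moreover have "hd (rev (drop (Suc i) ps)) = pm"
            using im lm by (simp add: hd_rev last_drop pm_def)
          ultimately show ?thesis using wps e2 dne
            by (simp add: cs_def walk_append walk_rev walk_take walk_drop insert_commute)
        qed
        have ccl: "{last cs, hd cs} \<in> E"
        proof -
          have "last cs = ps ! Suc i" using dne im lm by (simp add: cs_def last_rev hd_drop_conv_nth)
          moreover have "ps \<noteq> []" using len2 by auto
          then have "hd cs = p0" by (cases ps) (auto simp: cs_def p0_def)
          ultimately show ?thesis using e1 by (simp add: insert_commute)
        qed
        have closed: "N x \<subseteq> set ps" if x: "x \<in> set ps" for x
        proof
          fix u assume u: "u \<in> N x"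
          obtain r where r: "r < length cs" "cs ! r = x" using x setcs by (metis in_set_conv_nth)
          define qs where "qs = drop r cs @ take r cs"
          have wqs: "walk E qs" using walk_rot[OF wcs ccl r(1)] by (simp add: qs_def)
          have dqs: "distinct qs"
          proof -
            have "distinct (take r cs @ drop r cs)" using dcs by simp
            then show ?thesis unfolding qs_def distinct_append by blast
          qed
          have sqs: "set qs = set ps"
            using setcs by (metis qs_def append_take_drop_id set_append Un_commute)
          have hqs: "hd qs = x" using r by (simp add: qs_def hd_drop_conv_nth)
          have lqs: "length qs = length ps" using lcs by (simp add: qs_def)
          show "u \<in> set ps"
          proof (rule ccontr)
            assume nu: "u \<notin> set ps"
            have "{u, hd qs} \<in> E" using u hqs by (simp add: N_def insert_commute)
            then have "P (u # qs)" using nu wqs dqs sqs sps EV lqs len2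
              by (auto simp: P_def walk_Cons)
            then show False using maxps lqs by fastforce
          qed
        qed
        define C where "C = set ps"
        let ?E1 = "{e\<in>E. e \<subseteq> C}" let ?E2 = "{e\<in>E. e \<subseteq> V - C}"
        have Esplit: "E = ?E1 \<union> ?E2"
        proof
          show "E \<subseteq> ?E1 \<union> ?E2"
          proof
            fix e assume e: "e \<in> E"
            then obtain x y where xy: "e = {x,y}" "x \<noteq> y" using E2 card_2_iff by metis
            have "x \<in> V" "y \<in> V" using e xy EV by auto
            moreover have "x \<in> C \<Longrightarrow> y \<in> C" using closed e xy by (auto simp: C_def N_def)
            moreover have "{y,x} \<in> E" using e xy by (simp add: insert_commute)
            then have "y \<in> C \<Longrightarrow> x \<in> C" using closed by (auto simp: C_def N_def)
            ultimately show "e \<in> ?E1 \<union> ?E2" using e xy by auto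
          qed
        qed auto
        have disj: "?E1 \<inter> ?E2 = {}"
        proof -
          have "e \<noteq> {}" if "e \<in> E" for e using E2 that by fastforce
          then show ?thesis by blast
        qed
        have cE: "card E = card ?E1 + card ?E2"
          using Esplit disj finE by (metis card_Un_disjoint finite_Un)
        have cC: "card C = Suc m" using dps lm by (simp add: C_def distinct_card)
        have "card ?E1 \<le> card {B. B \<subseteq> C \<and> card B = 2}"
          using E2 by (intro card_mono) (auto simp: C_def)
        also have "\<dots> = card C choose 2" by (simp add: C_def n_subsets)
        finally have "2 * card ?E1 \<le> 2 * (Suc m choose 2)" using cC by simp
        also have "\<dots> \<le> Suc m * m" by (simp add: choose_two)
        also have "\<dots> \<le> Suc m * (l - 1)" using lenl lm by (intro mult_le_mono2) simp
        finally have b1: "2 * card ?E1 \<le> Suc m * (l - 1)" .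
        have CV: "C \<subseteq> V" using sps C_def by simp
        have cVC: "card (V - C) = card V - Suc m" using CV fin cC by (simp add: card_Diff_subset finite_subset)
        have mV: "Suc m \<le> card V" using CV fin cC by (metis card_mono)
        have lt: "card (V - C) < card V" using cVC mV by linarith
        have s: "?E2 \<subseteq> {e. e \<subseteq> V - C \<and> card e = 2}" using E2 by auto
        have np: "\<not>(\<exists>xs. length xs = Suc l \<and> distinct xs \<and> walk ?E2 xs \<and> set xs \<subseteq> V - C)"
        proof
          assume "\<exists>xs. length xs = Suc l \<and> distinct xs \<and> walk ?E2 xs \<and> set xs \<subseteq> V - C"
          then obtain xs where "length xs = Suc l" "distinct xs" "walk ?E2 xs" "set xs \<subseteq> V - C" by blast
          moreover have "walk E xs" using walk_mono[OF _ \<open>walk ?E2 xs\<close>] by blast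
          ultimately show False using noP by blast
        qed
        have b2: "2 * card ?E2 \<le> (l-1) * card (V - C)"
          using less.hyps[OF lt _ s l1 np] fin by blast
        have "(l-1) * card (V - C) = (l-1) * card V - (l-1) * Suc m"
          using cVC by (simp add: diff_mult_distrib2)
        moreover have "(l-1) * Suc m \<le> (l-1) * card V" using mV by (rule mult_le_mono2)
        moreover have "Suc m * (l - 1) = (l-1) * Suc m" by (rule mult.commute)
        ultimately have "Suc m * (l - 1) + (l-1) * card (V - C) = (l - 1) * card V"
          by linarith
        then show ?thesis using b1 b2 cE by linarith
      qed
    qed
  qed
qed

lemma double_count:
  assumes "finite V" "finite S" "\<forall>T\<in>S. T \<subseteq> V"
  shows "(\<Sum>v\<in>V. card {T\<in>S. v \<in> T}) = (\<Sum>T\<in>S. card T)"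
proof -
  have "(\<Sum>v\<in>V. card {T\<in>S. v \<in> T}) = (\<Sum>v\<in>V. \<Sum>T\<in>S. if v \<in> T then 1 else 0)"
    using assms(2) by (simp add: sum.inter_filter[symmetric])
  also have "\<dots> = (\<Sum>T\<in>S. \<Sum>v\<in>V. if v \<in> T then 1 else 0)" by (rule sum.swap)
  also have "\<dots> = (\<Sum>T\<in>S. card {v\<in>V. v \<in> T})"
    using assms(1) by (simp add: sum.inter_filter[symmetric])
  also have "\<dots> = (\<Sum>T\<in>S. card T)"
  proof (rule sum.cong)
    fix T assume "T \<in> S"
    then have "{v\<in>V. v \<in> T} = T" using assms(3) by auto
    then show "card {v\<in>V. v \<in> T} = card T" by simp
  qed simp
  finally show ?thesis .
qed

lemma finite_graphs_on: "finite (graphs_on n)"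
proof -
  have "{e. e \<subseteq> {..<n} \<and> card e = 2} \<subseteq> Pow {..<n}" by auto
  then have "finite {e. e \<subseteq> {..<n} \<and> card e = 2}" by (rule finite_subset) simp
  then show ?thesis by (simp add: graphs_on_def)
qed

lemma key:
  assumes G: "G \<in> graphs_on n" and cf: "cycle_free (2*k) G" and k: "k \<ge> 2"
  shows "3 * num_triangles G \<le> (2*k-3) * card G"
proof -
  have Gsub: "\<forall>e\<in>G. e \<subseteq> {..<n} \<and> card e = 2" using G by (auto simp: graphs_on_def)
  have G2: "\<forall>e\<in>G. card e = 2" using Gsub by auto
  have finG: "finite G" using G finite_graphs_on[of n] by (simp add: graphs_on_def finite_subset)
  define N where "N v = {u. {v,u} \<in> G}" for v
  define L where "L v = {e\<in>G. e \<subseteq> N v}" for v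
  have notin: "v \<notin> N v" for v using G2 by (auto simp: N_def)
  have Nsub: "N v \<subseteq> {..<n}" for v using Gsub by (auto simp: N_def)
  have finN: "finite (N v)" for v using Nsub by (meson finite_lessThan finite_subset)
  have edge_sym: "{a,b} \<in> G \<longleftrightarrow> {b,a} \<in> G" for a b by (simp add: insert_commute)
  have tri_sub: "triangles G \<subseteq> Pow {..<n}"
    using Gsub by (auto simp: triangles_def)
  have fint: "finite (triangles G)" using tri_sub by (rule finite_subset) simp
  have tri3: "card T = 3" if "T \<in> triangles G" for T
    using that by (auto simp: triangles_def)
  have link: "card {T\<in>triangles G. v \<in> T} = card (L v)" for v
  proof -
    have "insert v ` L v = {T\<in>triangles G. v \<in> T}"
    proof
      show "insert v ` L v \<subseteq> {T\<in>triangles G. v \<in> T}"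
      proof
        fix T assume "T \<in> insert v ` L v"
        then obtain e where e: "e \<in> G" "e \<subseteq> N v" "T = insert v e" by (auto simp: L_def)
        then obtain a b where ab: "e = {a,b}" "a \<noteq> b" using G2 card_2_iff by metis
        have va: "{v,a} \<in> G" "{v,b} \<in> G" using e ab by (auto simp: N_def)
        have "v \<noteq> a" "v \<noteq> b" using va G2 by fastforce+
        then have "T \<in> triangles G" unfolding triangles_def using e ab va by blast
        then show "T \<in> {T\<in>triangles G. v \<in> T}" using e by simp
      qed
    next
      show "{T\<in>triangles G. v \<in> T} \<subseteq> insert v ` L v"
      proof
        fix T assume T: "T \<in> {T\<in>triangles G. v \<in> T}"
        then obtain a b c where t: "T = {a,b,c}" "a \<noteq> b" "b \<noteq> c" "a \<noteq> c"
          "{a,b} \<in> G" "{b,c} \<in> G" "{a,c} \<in> G" by (auto simp: triangles_def)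
        have "v = a \<or> v = b \<or> v = c" using T t by auto
        then show "T \<in> insert v ` L v"
        proof (elim disjE)
          assume "v = a"
          then have "{b,c} \<in> L v" using t by (auto simp: L_def N_def)
          moreover have "T = insert v {b,c}" using t \<open>v = a\<close> by auto
          ultimately show ?thesis by blast
        next
          assume "v = b"
          then have "{a,c} \<in> L v" using t edge_sym by (auto simp: L_def N_def)
          moreover have "T = insert v {a,c}" using t \<open>v = b\<close> by auto
          ultimately show ?thesis by blast
        next
          assume "v = c"
          then have "{a,b} \<in> L v" using t edge_sym by (auto simp: L_def N_def)
          moreover have "T = insert v {a,b}" using t \<open>v = c\<close> by auto
          ultimately show ?thesis by blast
        qed
      qed
    qed
    moreover have "inj_on (insert v) (L v)"
    proof (rule inj_onI)
      fix x y assume xy: "x \<in> L v" "y \<in> L v" "insert v x = insert v y"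
      then have "v \<notin> x" "v \<notin> y" using notin[of v] by (auto simp: L_def)
      then show "x = y" using xy(3) by (metis Diff_insert_absorb)
    qed
    ultimately show ?thesis by (metis card_image)
  qed
  have eg: "2 * card (L v) \<le> (2*k-3) * card (N v)" for v
  proof -
    have s: "L v \<subseteq> {e. e \<subseteq> N v \<and> card e = 2}" using G2 by (auto simp: L_def)
    have np: "\<not>(\<exists>xs. length xs = Suc (2*k-2) \<and> distinct xs \<and> walk (L v) xs \<and> set xs \<subseteq> N v)"
    proof
      assume "\<exists>xs. length xs = Suc (2*k-2) \<and> distinct xs \<and> walk (L v) xs \<and> set xs \<subseteq> N v"
      then obtain vs where vs: "length vs = Suc (2*k-2)" "distinct vs" "walk (L v) vs" "set vs \<subseteq> N v"
        by blast
      have wG: "walk G vs" using walk_mono[OF _ vs(3)] by (auto simp: L_def)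
      then have wn: "\<And>j. Suc j < length vs \<Longrightarrow> {vs ! j, vs ! Suc j} \<in> G" by (simp add: walk_nth)
      have inN: "\<And>j. j < length vs \<Longrightarrow> {v, vs ! j} \<in> G"
        using vs(4) nth_mem unfolding N_def by blast
      define cs where "cs = v # vs"
      have lcs: "length cs = 2*k" using vs(1) k by (simp add: cs_def)
      have dcs: "distinct cs" using vs notin by (auto simp: cs_def)
      have "\<forall>i<2*k. {cs ! i, cs ! ((i + 1) mod (2*k))} \<in> G"
      proof (intro allI impI)
        fix i assume i: "i < 2*k"
        show "{cs ! i, cs ! ((i + 1) mod (2*k))} \<in> G"
        proof (cases "i = 0")
          case True
          then have "(i+1) mod (2*k) = 1" using k by simp
          then show ?thesis using True inN[of 0] vs(1) k by (simp add: cs_def)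
        next
          case False
          then obtain j where j: "i = Suc j" using not0_implies_Suc by blast
          show ?thesis
          proof (cases "i = 2*k - 1")
            case True
            then have "(i+1) mod (2*k) = 0" using k by simp
            moreover have "j < length vs" using j i vs(1) k by simp
            ultimately show ?thesis using inN[of j] j by (simp add: cs_def insert_commute)
          next
            case False
            then have "(i+1) mod (2*k) = Suc i" using i by simp
            moreover have "Suc j < length vs" using j i vs(1) k False by simp
            ultimately show ?thesis using wn[of j] j by (simp add: cs_def)
          qed
        qed
      qed
      then have "has_cycle (2*k) G" unfolding has_cycle_def using lcs dcs by blast
      then show False using cf by (simp add: cycle_free_def)
    qed
    have "2 * card (L v) \<le> (2*k-2 - 1) * card (N v)"
      by (rule EG[OF finN s _ np]) (use k in simp)
    moreover have "2*k-2-1 = 2*k-3" by simp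
    ultimately show ?thesis by simp
  qed
  have c1: "(\<Sum>v\<in>{..<n}. card {T\<in>triangles G. v \<in> T}) = 3 * card (triangles G)"
  proof -
    have "\<forall>T\<in>triangles G. T \<subseteq> {..<n}" using tri_sub by auto
    then have "(\<Sum>v\<in>{..<n}. card {T\<in>triangles G. v \<in> T}) = (\<Sum>T\<in>triangles G. card T)"
      using double_count[OF _ fint, of "{..<n}"] by simp
    also have "\<dots> = 3 * card (triangles G)" using tri3 by simp
    finally show ?thesis .
  qed
  have c2: "(\<Sum>v\<in>{..<n}. card (N v)) = 2 * card G"
  proof -
    have "(\<Sum>v\<in>{..<n}. card (N v)) = (\<Sum>v\<in>{..<n}. card {e\<in>G. v \<in> e})"
      using card_incident[OF G2] by (simp add: N_def)
    also have "\<dots> = (\<Sum>e\<in>G. card e)" using double_count[OF _ finG, of "{..<n}"] Gsub by auto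
    also have "\<dots> = 2 * card G" using G2 by simp
    finally show ?thesis .
  qed
  have "2 * (3 * card (triangles G)) = (\<Sum>v\<in>{..<n}. 2 * card (L v))"
  proof -
    have "(\<Sum>v\<in>{..<n}. 2 * card (L v)) = 2 * (\<Sum>v\<in>{..<n}. card (L v))" by (simp add: sum_distrib_left)
    then show ?thesis using c1 link by simp
  qed
  also have "\<dots> \<le> (\<Sum>v\<in>{..<n}. (2*k-3) * card (N v))" by (rule sum_mono) (rule eg)
  also have "\<dots> = (2*k-3) * (2 * card G)" by (simp only: sum_distrib_left[symmetric] c2)
  finally show ?thesis by (simp add: num_triangles_def mult.commute)
qed

theorem theorem1:
  fixes k n :: nat
  assumes "k \<ge> 2" and "n \<ge> 1"
  shows "real (t_cyc (2 * k) n) \<le> (real (2 * k) - 3) / 3 * real (ex_cyc n (2 * k))"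
proof -
  let ?S = "{G \<in> graphs_on n. cycle_free (2*k) G}"
  have finS: "finite ?S" using finite_graphs_on by simp
  have "\<exists>i. i < 2*k" using assms(1) by (intro exI[of _ 0]) simp
  then have "{} \<in> ?S" by (auto simp: graphs_on_def cycle_free_def has_cycle_def)
  then have neS: "?S \<noteq> {}" by blast
  have "t_cyc (2*k) n \<in> num_triangles ` ?S"
    unfolding t_cyc_def using finS neS by (intro Max_in) auto
  then obtain G where G: "G \<in> graphs_on n" "cycle_free (2*k) G" and t: "t_cyc (2*k) n = num_triangles G"
    by auto
  have ex: "card G \<le> ex_cyc n (2*k)" unfolding ex_cyc_def using finS G by (intro Max_ge) auto
  have kk: "3 * num_triangles G \<le> (2*k-3) * card G" using key[OF G assms(1)] .
  have r: "real (2*k) - 3 = real (2*k-3)" using assms(1) by simp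
  have "3 * real (t_cyc (2*k) n) \<le> real (2*k-3) * real (card G)"
    using kk t by (metis of_nat_le_iff of_nat_mult of_nat_numeral)
  also have "\<dots> \<le> real (2*k-3) * real (ex_cyc n (2*k))" using ex by (intro mult_left_mono) auto
  finally show ?thesis unfolding r by simp
qed

end
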